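(* For all positive integers $l$ and $m$, the double subdivided star $T_{l,m}$ admits no perfect state transfer between any pair of distinct vertices.
   Context: A subdivided star $SK_{1,l}$ is obtained by identifying exactly one pendant (end) vertex from each of $l$ copies of the path $P_3$; the identified vertex is the coalescence vertex. The double subdivided star $T_{l,m}$ is obtained from $SK_{1,l}$ and $SK_{1,m}$ by adding one edge joining their two coalescence vertices. For a graph $G$ with adjacency matrix $A$, let $U(t)=\exp(itA)$ for $t\in\mathbb{R}$, and let $\mathbf{e}_a$ be the standard basis vector of vertex $a$. $G$ has perfect state transfer between distinct vertices $a,b$ if there is $\tau\in\mathbb{R}$ and $\gamma\in\mathbb{C}$ with $U(\tau)\mathbf{e}_a=\gamma\mathbf{e}_b$. *)

theory Defs
  imports Complex_Main "Jordan_Normal_Form.Matrix"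
begin

text \<open>Double subdivided star T(l,m) on vertex set {0..<2l+2m+2}:
  vertex 0 = coalescence vertex of SK(1,l), vertex 1 = coalescence vertex of SK(1,m);
  the i-th copy of P3 in SK(1,l) (i < l) is the path 0 - (2+2i) - (3+2i);
  the j-th copy of P3 in SK(1,m) (j < m) is the path 1 - (2+2l+2j) - (3+2l+2j);
  plus the edge 0 - 1 joining the two coalescence vertices.\<close>

definition dss_nverts :: "nat \<Rightarrow> nat \<Rightarrow> nat" where
  "dss_nverts l m = 2 * l + 2 * m + 2"

definition dss_arc :: "nat \<Rightarrow> nat \<Rightarrow> nat \<Rightarrow> nat \<Rightarrow> bool" where
  "dss_arc l m u v \<longleftrightarrow>
     (u = 0 \<and> v = 1)
   \<or> (\<exists>i<l. (u = 0 \<and> v = 2 + 2 * i) \<or> (u = 2 + 2 * i \<and> v = 3 + 2 * i))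
   \<or> (\<exists>j<m. (u = 1 \<and> v = 2 + 2 * l + 2 * j) \<or> (u = 2 + 2 * l + 2 * j \<and> v = 3 + 2 * l + 2 * j))"

definition dss_edge :: "nat \<Rightarrow> nat \<Rightarrow> nat \<Rightarrow> nat \<Rightarrow> bool" where
  "dss_edge l m u v \<longleftrightarrow> dss_arc l m u v \<or> dss_arc l m v u"

definition dss_adj :: "nat \<Rightarrow> nat \<Rightarrow> complex mat" where
  "dss_adj l m = mat (dss_nverts l m) (dss_nverts l m)
                     (\<lambda>(u, v). if dss_edge l m u v then 1 else 0)"

definition transition_mat :: "complex mat \<Rightarrow> real \<Rightarrow> complex mat" where
  "transition_mat A t = mat (dim_row A) (dim_col A)
     (\<lambda>(u, v). \<Sum>k. ((\<i> * complex_of_real t) ^ k / of_nat (fact k)) * (A ^\<^sub>m k) $$ (u, v))"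

definition has_pst :: "complex mat \<Rightarrow> nat \<Rightarrow> nat \<Rightarrow> bool" where
  "has_pst A a b \<longleftrightarrow> a < dim_row A \<and> b < dim_row A \<and> a \<noteq> b \<and>
     (\<exists>\<tau>::real. \<exists>\<gamma>::complex.
        transition_mat A \<tau> *\<^sub>v unit_vec (dim_row A) a = \<gamma> \<cdot>\<^sub>v unit_vec (dim_row A) b)"

end

theory Submission
  imports Defs
begin

lemma pow_entry_bound:
  fixes A :: "complex mat"
  assumes A: "A \<in> carrier_mat n n" and bd: "\<And>i j. i < n \<Longrightarrow> j < n \<Longrightarrow> norm (A $$ (i,j)) \<le> 1"
  shows "i < n \<Longrightarrow> j < n \<Longrightarrow> norm ((A ^\<^sub>m k) $$ (i,j)) \<le> real n ^ k"
proof (induction k arbitrary: i j)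
  case 0
  then show ?case using A by auto
next
  case (Suc k)
  have "(A ^\<^sub>m Suc k) $$ (i,j) = (\<Sum>z\<in>{0..<n}. (A ^\<^sub>m k) $$ (i,z) * A $$ (z,j))"
    using Suc.prems A by (simp add: scalar_prod_def)
  also have "norm \<dots> \<le> (\<Sum>z\<in>{0..<n}. norm ((A ^\<^sub>m k) $$ (i,z) * A $$ (z,j)))"
    by (rule norm_sum)
  also have "\<dots> \<le> (\<Sum>z\<in>{0..<n}. real n ^ k * 1)"
  proof (rule sum_mono)
    fix z assume z: "z \<in> {0..<n}"
    show "norm ((A ^\<^sub>m k) $$ (i,z) * A $$ (z,j)) \<le> real n ^ k * 1"
      unfolding norm_mult
      using Suc.IH[of i z] bd[of z j] z Suc.prems
      by (intro mult_mono) auto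
  qed
  also have "\<dots> = real n ^ Suc k" by simp
  finally show ?case .
qed

lemma entry_summable:
  fixes A :: "complex mat"
  assumes A: "A \<in> carrier_mat n n" and bd: "\<And>i j. i < n \<Longrightarrow> j < n \<Longrightarrow> norm (A $$ (i,j)) \<le> 1"
    and ij: "i < n" "j < n"
  shows "summable (\<lambda>k. ((\<i> * complex_of_real t) ^ k / of_nat (fact k)) * (A ^\<^sub>m k) $$ (i, j))"
proof (rule summable_norm_cancel, rule summable_comparison_test)
  show "summable (\<lambda>k. (\<bar>t\<bar> * real n) ^ k /\<^sub>R fact k)"
    using exp_converges sums_summable by blast
  show "\<exists>N. \<forall>k\<ge>N. norm (norm (((\<i> * complex_of_real t) ^ k / of_nat (fact k)) * (A ^\<^sub>m k) $$ (i, j)))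
          \<le> (\<bar>t\<bar> * real n) ^ k /\<^sub>R fact k"
  proof (intro exI allI impI)
    fix k :: nat
    have "norm (((\<i> * complex_of_real t) ^ k / of_nat (fact k)) * (A ^\<^sub>m k) $$ (i, j))
        = \<bar>t\<bar> ^ k / fact k * norm ((A ^\<^sub>m k) $$ (i, j))"
      by (simp add: norm_mult norm_divide norm_power)
    also have "\<dots> \<le> \<bar>t\<bar> ^ k / fact k * real n ^ k"
      using pow_entry_bound[OF A bd ij] by (intro mult_left_mono) auto
    also have "\<dots> = (\<bar>t\<bar> * real n) ^ k /\<^sub>R fact k"
      by (simp add: power_mult_distrib divide_inverse)
    finally show "norm (norm (((\<i> * complex_of_real t) ^ k / of_nat (fact k)) * (A ^\<^sub>m k) $$ (i, j)))
          \<le> (\<bar>t\<bar> * real n) ^ k /\<^sub>R fact k" by simp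
  qed
qed

lemma left_eig_pow:
  fixes A :: "complex mat"
  assumes A: "A \<in> carrier_mat n n"
    and eig: "\<And>a. a < n \<Longrightarrow> (\<Sum>w<n. v w * A $$ (w,a)) = \<theta> * v a"
  shows "a < n \<Longrightarrow> (\<Sum>w<n. v w * (A ^\<^sub>m k) $$ (w,a)) = \<theta> ^ k * v a"
proof (induction k arbitrary: a)
  case 0
  have "(\<Sum>w<n. v w * (A ^\<^sub>m 0) $$ (w,a)) = (\<Sum>w<n. if w = a then v w else 0)"
    using A 0 by (intro sum.cong) auto
  also have "\<dots> = v a" using 0 by simp
  finally show ?case by simp
next
  case (Suc k)
  have "(\<Sum>w<n. v w * (A ^\<^sub>m Suc k) $$ (w,a)) = (\<Sum>w<n. \<Sum>z<n. v w * ((A ^\<^sub>m k) $$ (w,z) * A $$ (z,a)))"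
    using A Suc.prems by (intro sum.cong) (auto simp: scalar_prod_def sum_distrib_left atLeast0LessThan)
  also have "\<dots> = (\<Sum>z<n. (\<Sum>w<n. v w * (A ^\<^sub>m k) $$ (w,z)) * A $$ (z,a))"
    by (subst sum.swap) (simp add: sum_distrib_right mult.assoc)
  also have "\<dots> = (\<Sum>z<n. \<theta> ^ k * (v z * A $$ (z,a)))"
    using Suc.IH by (intro sum.cong) auto
  also have "\<dots> = \<theta> ^ k * (\<theta> * v a)"
    using eig[OF Suc.prems] by (simp add: sum_distrib_left[symmetric])
  finally show ?case by simp
qed

lemma eig_transfer:
  fixes A :: "complex mat" and \<theta> t :: real
  assumes A: "A \<in> carrier_mat n n" and bd: "\<And>i j. i < n \<Longrightarrow> j < n \<Longrightarrow> norm (A $$ (i,j)) \<le> 1"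
    and eig: "\<And>a. a < n \<Longrightarrow> (\<Sum>w<n. v w * A $$ (w,a)) = complex_of_real \<theta> * v a"
    and a: "a < n"
  shows "(\<Sum>w<n. v w * transition_mat A t $$ (w,a)) = exp (\<i> * complex_of_real (t * \<theta>)) * v a"
proof -
  let ?c = "\<lambda>k. (\<i> * complex_of_real t) ^ k / of_nat (fact k)"
  have U: "transition_mat A t $$ (w,a) = (\<Sum>k. ?c k * (A ^\<^sub>m k) $$ (w, a))" if "w < n" for w
    using A that a unfolding transition_mat_def by auto
  have s1: "(\<lambda>k. \<Sum>w<n. v w * (?c k * (A ^\<^sub>m k) $$ (w, a))) sums (\<Sum>w<n. v w * transition_mat A t $$ (w,a))"
  proof (rule sums_sum)
    fix w assume "w \<in> {..<n}"
    then have w: "w < n" by simp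
    show "(\<lambda>k. v w * (?c k * (A ^\<^sub>m k) $$ (w, a))) sums (v w * transition_mat A t $$ (w,a))"
      unfolding U[OF w] by (rule sums_mult, rule summable_sums, rule entry_summable[OF A bd w a])
  qed
  have eq: "(\<Sum>w<n. v w * (?c k * (A ^\<^sub>m k) $$ (w, a))) = (\<i> * complex_of_real (t * \<theta>)) ^ k /\<^sub>R fact k * v a" for k
  proof -
    have "(\<Sum>w<n. v w * (?c k * (A ^\<^sub>m k) $$ (w, a))) = ?c k * (\<Sum>w<n. v w * (A ^\<^sub>m k) $$ (w, a))"
      by (simp add: sum_distrib_left mult.left_commute)
    also have "\<dots> = ?c k * (complex_of_real \<theta> ^ k * v a)"
      using left_eig_pow[OF A eig a] by simp
    also have "\<dots> = (\<i> * complex_of_real (t * \<theta>)) ^ k /\<^sub>R fact k * v a"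
      by (simp add: scaleR_conv_of_real power_mult_distrib divide_inverse mult_ac)
    finally show ?thesis .
  qed
  have s2: "(\<lambda>k. (\<i> * complex_of_real (t * \<theta>)) ^ k /\<^sub>R fact k * v a) sums (exp (\<i> * complex_of_real (t * \<theta>)) * v a)"
    by (rule sums_mult2, rule exp_converges)
  show ?thesis using s1 s2 unfolding eq using sums_unique2 by blast
qed

lemma transition_zero:
  fixes A :: "complex mat"
  assumes A: "A \<in> carrier_mat n n" and a: "a < n"
  shows "transition_mat A 0 $$ (a,a) = 1"
proof -
  have "transition_mat A 0 $$ (a,a) = (\<Sum>k. ((\<i> * complex_of_real 0) ^ k / of_nat (fact k)) * (A ^\<^sub>m k) $$ (a, a))"
    using A a unfolding transition_mat_def by auto
  also have "\<dots> = (\<Sum>k\<in>{0}. ((\<i> * complex_of_real 0) ^ k / of_nat (fact k)) * (A ^\<^sub>m k) $$ (a, a))"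
    by (rule suminf_finite) auto
  also have "\<dots> = 1" using A a by simp
  finally show ?thesis .
qed

lemma pst_entries:
  assumes "transition_mat A \<tau> *\<^sub>v unit_vec (dim_row A) a = \<gamma> \<cdot>\<^sub>v unit_vec (dim_row A) b"
    and "a < dim_row A" "b < dim_row A" "w < dim_row A" "dim_col A = dim_row A"
  shows "transition_mat A \<tau> $$ (w,a) = (if w = b then \<gamma> else 0)"
proof -
  have "(transition_mat A \<tau> *\<^sub>v unit_vec (dim_row A) a) $ w = transition_mat A \<tau> $$ (w,a)"
    using assms(2-5) by (simp add: transition_mat_def)
  then show ?thesis using assms(1,3,4) by auto
qed

lemma par_neq1[simp]: "(2*a::nat) \<noteq> Suc (2*b)" by presburger
lemma par_neq2[simp]: "Suc (2*a::nat) \<noteq> 2*b" by presburger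

lemma nbr_set_0: "{w \<in> {..<dss_nverts l m}. dss_edge l m w 0} = insert 1 ((\<lambda>i. 2 + 2*i) ` {..<l})"
  unfolding dss_nverts_def dss_edge_def dss_arc_def by auto

lemma nbr_set_1: "{w \<in> {..<dss_nverts l m}. dss_edge l m w 1} = insert 0 ((\<lambda>j. 2 + 2*l + 2*j) ` {..<m})"
  unfolding dss_nverts_def dss_edge_def dss_arc_def by auto

lemma nbr_set_x: "i < l \<Longrightarrow> {w \<in> {..<dss_nverts l m}. dss_edge l m w (2+2*i)} = {0, 3+2*i}"
  unfolding dss_nverts_def dss_edge_def dss_arc_def by auto

lemma nbr_set_y: "i < l \<Longrightarrow> {w \<in> {..<dss_nverts l m}. dss_edge l m w (3+2*i)} = {2+2*i}"
  unfolding dss_nverts_def dss_edge_def dss_arc_def by auto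

lemma nbr_set_x': "j < m \<Longrightarrow> {w \<in> {..<dss_nverts l m}. dss_edge l m w (2+2*l+2*j)} = {1, 3+2*l+2*j}"
  unfolding dss_nverts_def dss_edge_def dss_arc_def by auto

lemma nbr_set_y': "j < m \<Longrightarrow> {w \<in> {..<dss_nverts l m}. dss_edge l m w (3+2*l+2*j)} = {2+2*l+2*j}"
  unfolding dss_nverts_def dss_edge_def dss_arc_def by auto

lemma vertex_cases:
  assumes "a < dss_nverts l m"
  obtains "a = 0" | "a = 1" | i where "i < l" "a = 2+2*i" | i where "i < l" "a = 3+2*i"
    | j where "j < m" "a = 2+2*l+2*j" | j where "j < m" "a = 3+2*l+2*j"
proof -
  consider "a = 0" | "a = 1" | "2 \<le> a" "a < 2 + 2*l" | "2 + 2*l \<le> a" by linarith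
  then show ?thesis
  proof cases
    case 3
    show ?thesis
    proof (cases "even a")
      case True
      have "(a - 2) div 2 < l" "a = 2 + 2*((a - 2) div 2)" using True 3 by presburger+
      then show ?thesis by (rule that(3))
    next
      case False
      have "(a - 3) div 2 < l" "a = 3 + 2*((a - 3) div 2)" using False 3 by presburger+
      then show ?thesis by (rule that(4))
    qed
  next
    case 4
    have b: "a < 2 + 2*l + 2*m" using assms unfolding dss_nverts_def by simp
    show ?thesis
    proof (cases "even a")
      case True
      have "(a - 2 - 2*l) div 2 < m" "a = 2 + 2*l + 2*((a - 2 - 2*l) div 2)" using True 4 b by presburger+
      then show ?thesis by (rule that(5))
    next
      case False
      have "(a - 3 - 2*l) div 2 < m" "a = 3 + 2*l + 2*((a - 3 - 2*l) div 2)" using False 4 b by presburger+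
      then show ?thesis by (rule that(6))
    qed
  qed (use that in auto)
qed

definition hpoly :: "nat \<Rightarrow> nat \<Rightarrow> real \<Rightarrow> real" where
  "hpoly l m u = u * (u - 1 - real l) * (u - 1 - real m) - (u - 1)^2"

definition evec :: "nat \<Rightarrow> real \<Rightarrow> nat \<Rightarrow> real" where
  "evec l \<theta> w = (if w = 0 then (\<theta>^2 - 1)^2
     else if w = 1 then \<theta> * (\<theta>^2 - 1 - real l) * (\<theta>^2 - 1)
     else if w < 2 + 2*l then (if even w then \<theta> * (\<theta>^2 - 1) else \<theta>^2 - 1)
     else (if even w then \<theta>^2 * (\<theta>^2 - 1 - real l) else \<theta> * (\<theta>^2 - 1 - real l)))"

lemma evec_eig:
  assumes h: "hpoly l m (\<theta>^2) = 0" and a: "a < dss_nverts l m"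
  shows "(\<Sum>w<dss_nverts l m. if dss_edge l m w a then evec l \<theta> w else 0) = \<theta> * evec l \<theta> a"
proof -
  have S: "(\<Sum>w<dss_nverts l m. if dss_edge l m w a then evec l \<theta> w else 0)
      = sum (evec l \<theta>) {w \<in> {..<dss_nverts l m}. dss_edge l m w a}"
    using sum.inter_filter[of "{..<dss_nverts l m}" "evec l \<theta>" "\<lambda>w. dss_edge l m w a"] by simp
  have inj1: "inj_on (\<lambda>i. 2 + 2*i) {..<l}" by (auto simp: inj_on_def)
  have inj2: "inj_on (\<lambda>j. 2 + 2*l + 2*j) {..<m}" by (auto simp: inj_on_def)
  from a show ?thesis
  proof (cases rule: vertex_cases)
    case 1
    have "sum (evec l \<theta>) (insert 1 ((\<lambda>i. 2 + 2*i) ` {..<l})) = evec l \<theta> 1 + (\<Sum>i<l. evec l \<theta> (2 + 2*i))"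
    proof -
      have "sum (evec l \<theta>) ((\<lambda>i. 2 + 2*i) ` {..<l}) = (\<Sum>i<l. evec l \<theta> (2 + 2*i))"
        by (rule sum.reindex_cong[OF inj1 refl]) simp
      then show ?thesis by (subst sum.insert) auto
    qed
    also have "(\<Sum>i<l. evec l \<theta> (2 + 2*i)) = (\<Sum>i<l. \<theta> * (\<theta>^2 - 1))"
      by (intro sum.cong) (auto simp: evec_def)
    finally show ?thesis unfolding S unfolding 1 nbr_set_0 by (simp add: evec_def algebra_simps power2_eq_square)
  next
    case 2
    have "sum (evec l \<theta>) (insert 0 ((\<lambda>j. 2 + 2*l + 2*j) ` {..<m})) = evec l \<theta> 0 + (\<Sum>j<m. evec l \<theta> (2 + 2*l + 2*j))"
    proof -
      have "sum (evec l \<theta>) ((\<lambda>j. 2 + 2*l + 2*j) ` {..<m}) = (\<Sum>j<m. evec l \<theta> (2 + 2*l + 2*j))"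
        by (rule sum.reindex_cong[OF inj2 refl]) simp
      then show ?thesis by (subst sum.insert) auto
    qed
    also have "(\<Sum>j<m. evec l \<theta> (2 + 2*l + 2*j)) = (\<Sum>j<m. \<theta>^2 * (\<theta>^2 - 1 - real l))"
      by (intro sum.cong) (auto simp: evec_def)
    finally show ?thesis unfolding S unfolding 2 nbr_set_1 using h
      by (simp add: evec_def hpoly_def algebra_simps power2_eq_square power3_eq_cube)
  next
    case (3 i)
    show ?thesis unfolding S unfolding 3(2) nbr_set_x[OF 3(1)] using 3(1)
      by (simp add: evec_def algebra_simps power2_eq_square)
  next
    case (4 i)
    show ?thesis unfolding S unfolding 4(2) nbr_set_y[OF 4(1)] using 4(1)
      by (simp add: evec_def algebra_simps power2_eq_square)
  next
    case (5 j)
    show ?thesis unfolding S unfolding 5(2) nbr_set_x'[OF 5(1)] using 5(1)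
      by (simp add: evec_def algebra_simps power2_eq_square)
  next
    case (6 j)
    show ?thesis unfolding S unfolding 6(2) nbr_set_y'[OF 6(1)] using 6(1)
      by (simp add: evec_def algebra_simps power2_eq_square)
  qed
qed

lemma evec_nonzero:
  assumes "\<theta> \<noteq> 0" "\<theta>^2 \<noteq> 1" "\<theta>^2 \<noteq> 1 + real l"
  shows "evec l \<theta> w \<noteq> 0"
  using assms by (auto simp: evec_def)

lemma evec_neg: "evec l (-\<theta>) w = evec l \<theta> w \<or> evec l (-\<theta>) w = - evec l \<theta> w"
  by (auto simp: evec_def)

lemma dss_adj_carrier: "dss_adj l m \<in> carrier_mat (dss_nverts l m) (dss_nverts l m)"
  unfolding dss_adj_def by auto

lemma dss_adj_bd: "i < dss_nverts l m \<Longrightarrow> j < dss_nverts l m \<Longrightarrow> norm (dss_adj l m $$ (i,j)) \<le> 1"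
  unfolding dss_adj_def by auto

lemma evec_eig_c:
  assumes h: "hpoly l m (\<theta>^2) = 0" and a: "a < dss_nverts l m"
  shows "(\<Sum>w<dss_nverts l m. complex_of_real (evec l \<theta> w) * dss_adj l m $$ (w,a))
     = complex_of_real \<theta> * complex_of_real (evec l \<theta> a)"
proof -
  have "(\<Sum>w<dss_nverts l m. complex_of_real (evec l \<theta> w) * dss_adj l m $$ (w,a))
      = complex_of_real (\<Sum>w<dss_nverts l m. if dss_edge l m w a then evec l \<theta> w else 0)"
    unfolding of_real_sum using a by (intro sum.cong) (auto simp: dss_adj_def)
  also have "\<dots> = complex_of_real \<theta> * complex_of_real (evec l \<theta> a)"
    using evec_eig[OF h a] by simp
  finally show ?thesis .
qed

lemma transfer_eq:
  fixes \<tau> \<theta> :: real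
  assumes h: "hpoly l m (\<theta>^2) = 0" and a: "a < dss_nverts l m" and b: "b < dss_nverts l m"
    and U: "\<And>w. w < dss_nverts l m \<Longrightarrow> transition_mat (dss_adj l m) \<tau> $$ (w,a) = (if w = b then \<gamma> else 0)"
  shows "exp (\<i> * complex_of_real (\<tau> * \<theta>)) * complex_of_real (evec l \<theta> a) = \<gamma> * complex_of_real (evec l \<theta> b)"
proof -
  have "(\<Sum>w<dss_nverts l m. complex_of_real (evec l \<theta> w) * transition_mat (dss_adj l m) \<tau> $$ (w,a))
      = exp (\<i> * complex_of_real (\<tau> * \<theta>)) * complex_of_real (evec l \<theta> a)"
    by (rule eig_transfer[OF dss_adj_carrier dss_adj_bd evec_eig_c[OF h] a])
  moreover have "(\<Sum>w<dss_nverts l m. complex_of_real (evec l \<theta> w) * transition_mat (dss_adj l m) \<tau> $$ (w,a))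
      = (\<Sum>w<dss_nverts l m. if w = b then complex_of_real (evec l \<theta> w) * \<gamma> else 0)"
    using U by (intro sum.cong) auto
  moreover have "\<dots> = complex_of_real (evec l \<theta> b) * \<gamma>" using b by simp
  ultimately show ?thesis by (simp add: mult.commute)
qed

lemma four_period:
  fixes E F \<gamma> x y \<sigma> \<rho> :: complex
  assumes "E * F = 1" "E * x = \<gamma> * y" "F * (\<sigma> * x) = \<gamma> * (\<rho> * y)" "x \<noteq> 0"
    "\<sigma> = 1 \<or> \<sigma> = -1" "\<rho> = 1 \<or> \<rho> = -1"
  shows "E ^ 4 = 1"
proof -
  have "F * (\<sigma> * x) = \<rho> * (E * x)" using assms(2,3) by (simp add: mult_ac)
  then have "F * \<sigma> = \<rho> * E" using assms(4) by (simp add: mult_ac)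
  have "\<sigma> = (E * F) * \<sigma>" using assms(1) by simp
  also have "\<dots> = E * (F * \<sigma>)" by (simp add: mult.assoc)
  also have "\<dots> = \<rho> * E^2" using \<open>F * \<sigma> = \<rho> * E\<close> by (simp add: power2_eq_square mult_ac)
  finally have "\<sigma>^2 = \<rho>^2 * E^4" by (simp add: power_mult_distrib flip: power_mult)
  then show ?thesis using assms(5,6) by auto
qed

lemma root_period:
  fixes \<tau> u :: real
  assumes h: "hpoly l m u = 0" and u: "u > 0" "u \<noteq> 1" "u \<noteq> 1 + real l"
    and a: "a < dss_nverts l m" and b: "b < dss_nverts l m"
    and U: "\<And>w. w < dss_nverts l m \<Longrightarrow> transition_mat (dss_adj l m) \<tau> $$ (w,a) = (if w = b then \<gamma> else 0)"
  shows "\<exists>k::int. 4 * \<tau> * sqrt u = of_int k * 2 * pi"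
proof -
  define \<theta> where "\<theta> = sqrt u"
  have th2: "\<theta>^2 = u" "(-\<theta>)^2 = u" using u by (auto simp: \<theta>_def)
  have th0: "\<theta> \<noteq> 0" using u by (simp add: \<theta>_def)
  let ?E = "exp (\<i> * complex_of_real (\<tau> * \<theta>))"
  let ?F = "exp (\<i> * complex_of_real (\<tau> * (-\<theta>)))"
  have EF: "?E * ?F = 1" by (simp flip: exp_add)
  have e1: "?E * complex_of_real (evec l \<theta> a) = \<gamma> * complex_of_real (evec l \<theta> b)"
    by (rule transfer_eq[OF _ a b U]) (simp add: th2 h)
  have e2: "?F * complex_of_real (evec l (-\<theta>) a) = \<gamma> * complex_of_real (evec l (-\<theta>) b)"
    by (rule transfer_eq[OF _ a b U]) (simp add: th2 h)
  obtain \<sigma> :: complex where s: "\<sigma> = 1 \<or> \<sigma> = -1" "complex_of_real (evec l (-\<theta>) a) = \<sigma> * complex_of_real (evec l \<theta> a)"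
    using evec_neg[of l \<theta> a] by (metis mult_1 mult_minus1 of_real_minus)
  obtain \<rho> :: complex where r: "\<rho> = 1 \<or> \<rho> = -1" "complex_of_real (evec l (-\<theta>) b) = \<rho> * complex_of_real (evec l \<theta> b)"
    using evec_neg[of l \<theta> b] by (metis mult_1 mult_minus1 of_real_minus)
  have nz: "complex_of_real (evec l \<theta> a) \<noteq> 0"
    using evec_nonzero[of \<theta> l a] th0 th2 u by simp
  have E4: "?E ^ 4 = 1"
    by (rule four_period[OF EF e1 _ nz s(1) r(1)]) (use e2 s(2) r(2) in simp)
  have "exp (\<i> * complex_of_real (4 * \<tau> * \<theta>)) = ?E ^ 4"
    by (simp flip: exp_of_nat_mult add: mult_ac)
  then have "cis (4 * \<tau> * \<theta>) = 1" using E4 by (simp add: cis_conv_exp)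
  then have "cos (4 * \<tau> * \<theta>) = 1" by (metis cis.sel(1) one_complex.sel(1))
  then show ?thesis unfolding \<theta>_def cos_one_2pi_int by blast
qed

lemma hpoly_expand: "hpoly l m x = x^3 - (3 + real l + real m) * x^2 + ((1 + real l) * (1 + real m) + 2) * x - 1"
  unfolding hpoly_def by (simp add: algebra_simps power2_eq_square power3_eq_cube)

lemma no_rational_root:
  assumes q: "x \<in> \<rat>" and x: "0 < x" "x < 1" and h: "hpoly l m x = 0"
  shows False
proof -
  obtain p d :: int where d: "d > 0" "coprime p d" "x = of_int p / of_int d"
    using Rats_cases'[OF q] by blast
  define S :: int where "S = 3 + int l + int m"
  define Q :: int where "Q = (1 + int l) * (1 + int m) + 2"
  have xd: "x * real_of_int d = real_of_int p" using d(1,3) by simp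
  have "real_of_int d ^ 3 * hpoly l m x = (x * real_of_int d)^3 - real_of_int S * (x * real_of_int d)^2 * real_of_int d
          + real_of_int Q * (x * real_of_int d) * real_of_int d ^ 2 - real_of_int d ^ 3"
    unfolding hpoly_expand S_def Q_def by (simp add: algebra_simps power2_eq_square power3_eq_cube)
  then have "real_of_int (p^3 - S * p^2 * d + Q * p * d^2 - d^3) = 0"
    unfolding xd using h by simp
  then have eq: "p^3 = d * (S * p^2 - Q * p * d + d^2)"
    by (simp only: of_int_eq_0_iff) (simp add: algebra_simps power2_eq_square power3_eq_cube)
  have "d dvd p^3" unfolding eq by simp
  moreover have "coprime (p^3) d" using d(2) by simp
  ultimately have "\<bar>d\<bar> = 1" using coprime_common_divisor_int[of "p^3" d d] by simp
  then have "d = 1" using d(1) by simp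
  then have "x = of_int p" using d(3) by simp
  then have "0 < p" "p < 1" using x by simp_all
  then show False by simp
qed

lemma hpoly_cont: "isCont (hpoly l m) x"
  unfolding hpoly_def by (intro continuous_intros)

lemma three_roots:
  assumes "l \<ge> 1" "m \<ge> 1"
  obtains u1 u2 u3 where "0 < u1" "u1 < 1" "1 < u2" "u2 < 1 + real l" "1 + real l < u3"
    "hpoly l m u1 = 0" "hpoly l m u2 = 0" "hpoly l m u3 = 0"
proof -
  have h0: "hpoly l m 0 < 0" by (simp add: hpoly_def)
  have h1: "hpoly l m 1 > 0" using assms by (simp add: hpoly_def)
  have hl: "hpoly l m (1 + real l) < 0" using assms by (simp add: hpoly_def)
  have hK: "hpoly l m (3 + real l + real m) > 0"
  proof -
    have "(2 + real l + real m)^2 < (3 + real l + real m) * ((2 + real m) * (2 + real l))"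
    proof -
      have p: "0 \<le> real l * real l" "0 \<le> real m * real m" "0 \<le> real l * (real l * real m)"
        "0 \<le> real l * (real m * real m)" "0 \<le> real l * (real m * 5)" by auto
      show ?thesis apply (simp add: algebra_simps power2_eq_square) using p by linarith
    qed
    then show ?thesis by (simp add: hpoly_def algebra_simps)
  qed
  obtain u1 where u1: "0 \<le> u1" "u1 \<le> 1" "hpoly l m u1 = 0"
    using IVT[of "hpoly l m" 0 0 1] h0 h1 hpoly_cont by force
  obtain u2 where u2: "1 \<le> u2" "u2 \<le> 1 + real l" "hpoly l m u2 = 0"
    using IVT2[of "hpoly l m" "1 + real l" 0 1] h1 hl hpoly_cont by force
  obtain u3 where u3: "1 + real l \<le> u3" "u3 \<le> 3 + real l + real m" "hpoly l m u3 = 0"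
    using IVT[of "hpoly l m" "1 + real l" 0 "3 + real l + real m"] hl hK hpoly_cont by force
  have ne: "0 \<noteq> u1" "u1 \<noteq> 1" "1 \<noteq> u2" "u2 \<noteq> 1 + real l" "1 + real l \<noteq> u3"
    using u1 u2 u3 h0 h1 hl by auto
  show ?thesis
    apply (rule that[of u1 u2 u3])
    using u1 u2 u3 ne by (simp_all add: less_le)
qed

lemma vieta_sum:
  assumes "hpoly l m x = 0" "hpoly l m y = 0" "hpoly l m z = 0" "x \<noteq> y" "x \<noteq> z" "y \<noteq> z"
  shows "x + y + z = 3 + real l + real m"
proof -
  define S where "S = 3 + real l + real m"
  define Q where "Q = (1 + real l) * (1 + real m) + 2"
  have hp: "\<And>t. hpoly l m t = t^3 - S * t^2 + Q * t - 1" unfolding S_def Q_def hpoly_expand by simp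
  have d: "\<And>s t. hpoly l m s - hpoly l m t = (s - t) * (s^2 + s*t + t^2 - S*(s+t) + Q)"
    unfolding hp by (simp add: algebra_simps power2_eq_square power3_eq_cube)
  have e1: "x^2 + x*y + y^2 - S*(x+y) + Q = 0" using d[of x y] assms by simp
  have e2: "x^2 + x*z + z^2 - S*(x+z) + Q = 0" using d[of x z] assms by simp
  have "(y - z) * (x + y + z - S) = 0" using e1 e2 by (simp add: algebra_simps power2_eq_square)
  then show ?thesis using assms(6) unfolding S_def by simp
qed

lemma sq_from_period:
  fixes \<tau> u :: real and k :: int
  assumes "4 * \<tau> * sqrt u = of_int k * 2 * pi" "\<tau> \<noteq> 0" "u \<ge> 0"
  shows "u = of_int (k^2) * (pi^2 / (4 * \<tau>^2))"
proof -
  have "sqrt u = of_int k * pi / (2 * \<tau>)" using assms(1,2) by (simp add: field_simps)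
  then have "(sqrt u)^2 = (of_int k * pi / (2 * \<tau>))^2" by simp
  then show ?thesis using assms(3) by (simp add: power_divide power_mult_distrib)
qed

theorem theorem3p1:
  fixes l m :: nat
  assumes "l \<ge> 1" and "m \<ge> 1"
  shows "\<forall>a b. a \<noteq> b \<longrightarrow> \<not> has_pst (dss_adj l m) a b"
proof (intro allI impI notI)
  fix a b assume ab: "a \<noteq> b" and pst: "has_pst (dss_adj l m) a b"
  have dims: "dim_row (dss_adj l m) = dss_nverts l m" "dim_col (dss_adj l m) = dss_nverts l m"
    by (simp_all add: dss_adj_def)
  from pst obtain \<tau> \<gamma> where a: "a < dss_nverts l m" and b: "b < dss_nverts l m"
    and eq: "transition_mat (dss_adj l m) \<tau> *\<^sub>v unit_vec (dss_nverts l m) a = \<gamma> \<cdot>\<^sub>v unit_vec (dss_nverts l m) b"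
    unfolding has_pst_def dims by blast
  have U: "transition_mat (dss_adj l m) \<tau> $$ (w,a) = (if w = b then \<gamma> else 0)" if "w < dss_nverts l m" for w
    using pst_entries[of "dss_adj l m" \<tau> a \<gamma> b w] eq a b that dims by simp
  show False
  proof (cases "\<tau> = 0")
    case True
    then show False using transition_zero[OF dss_adj_carrier a] U[OF a] ab by simp
  next
    case False
    obtain u1 u2 u3 where r: "0 < u1" "u1 < 1" "1 < u2" "u2 < 1 + real l" "1 + real l < u3"
      "hpoly l m u1 = 0" "hpoly l m u2 = 0" "hpoly l m u3 = 0"
      using three_roots[OF assms] by blast
    obtain k1 where k1: "4 * \<tau> * sqrt u1 = of_int k1 * 2 * pi"
      using root_period[OF r(6) _ _ _ a b U] r by force
    obtain k2 where k2: "4 * \<tau> * sqrt u2 = of_int k2 * 2 * pi"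
      using root_period[OF r(7) _ _ _ a b U] r by force
    obtain k3 where k3: "4 * \<tau> * sqrt u3 = of_int k3 * 2 * pi"
      using root_period[OF r(8) _ _ _ a b U] r by force
    define R where "R = pi^2 / (4 * \<tau>^2)"
    have s1: "u1 = of_int (k1^2) * R" unfolding R_def by (rule sq_from_period[OF k1 False]) (use r in simp)
    have s2: "u2 = of_int (k2^2) * R" unfolding R_def by (rule sq_from_period[OF k2 False]) (use r in simp)
    have s3: "u3 = of_int (k3^2) * R" unfolding R_def by (rule sq_from_period[OF k3 False]) (use r in simp)
    have vs: "u1 + u2 + u3 = 3 + real l + real m"
      by (rule vieta_sum[OF r(6-8)]) (use r in auto)
    define N where "N = k1^2 + k2^2 + k3^2"
    have RN: "R * of_int N = 3 + real l + real m" using vs unfolding s1 s2 s3 N_def by (simp add: algebra_simps)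
    then have N0: "of_int N \<noteq> (0::real)" by auto
    have "u1 = of_int (k1^2) * (R * of_int N) / of_int N"
      using N0 s1 by simp
    then have "u1 = of_int (k1^2) * (3 + real l + real m) / of_int N" unfolding RN .
    then have "u1 \<in> \<rat>" by simp
    then show False using no_rational_root r by blast
  qed
qed

end
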